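(* Fix a positive integer $n$, $\delta>0$, $\eta_0\in(0,1)$, $\lambda>0$, and $\epsilon_{\text{cov}},\epsilon_{\text{rel}}\in(0,1)$. Let the transmittance be deterministic, $\eta=\eta_0$, and let $\overline{n}_B\sim\mathrm{Exp}(\lambda)$ (density $\lambda e^{-\lambda x}$, $x\ge0$). Consider the risk-constrained program \[ \max_{q,R}\; qR \quad\text{s.t.}\quad \mathbb{P}\!\left[q>\tfrac{2\delta}{\sqrt{n}}\,c_{\text{cov}}(\eta_0,\overline{n}_B)\right]\le\epsilon_{\text{cov}},\quad \mathbb{P}\!\left[R>R_{\text{ach}}(\eta_0,\overline{n}_B)\right]\le\epsilon_{\text{rel}},\quad 0\le q\le1,\ 0\le R\le1. \] Then its optimum is $(q^*,R^* )=(q_{\max},R_{\max})$ with \[ q_{\max}=\min\!\left\{1,\ \frac{2\delta}{\sqrt n}\,k\sqrt{\frac{Z^2-1}{4\eta_0}}\right\},\qquad R_{\max}=\Big[1-H\big(\vec p(\eta_0,-\tfrac1\lambda\ln\epsilon_{\text{rel}})\big)\Big]^+, \] where $k=\dfrac{\sqrt{2\eta_0}}{1-\eta_0}$ and $Z=1-\dfrac{2\eta_0}{\lambda}\ln(1-\epsilon_{\text{cov}})$.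
   Context: Definitions: for $\eta\in(0,1)$ and $\overline{n}_B\ge0$, $c_{\text{cov}}(\eta,\overline{n}_B)=\dfrac{\sqrt{2\eta\overline{n}_B(1+\eta\overline{n}_B)}}{1-\eta}$; $p(\eta,\overline{n}_B)=1-\dfrac{\eta}{[1+(1-\eta)\overline{n}_B]^4}$; $\vec p(\eta,\overline{n}_B)=(1-\tfrac{3p}{4},\tfrac p4,\tfrac p4,\tfrac p4)$; $H(\vec p)=-\sum_i p_i\log_2p_i$ (with $0\log0=0$); $R_{\text{ach}}(\eta,\overline{n}_B)=(1-H(\vec p(\eta,\overline{n}_B)))^+$ with $(x)^+=\max(x,0)$. Probabilities are over the randomness of $\overline{n}_B$. *)

theory Defs
  imports "HOL-Probability.Probability"
begin

definition c_cov :: "real \<Rightarrow> real \<Rightarrow> real" where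
  "c_cov \<eta> nB = sqrt (2 * \<eta> * nB * (1 + \<eta> * nB)) / (1 - \<eta>)"

definition p_dep :: "real \<Rightarrow> real \<Rightarrow> real" where
  "p_dep \<eta> nB = 1 - \<eta> / (1 + (1 - \<eta>) * nB) ^ 4"

definition p_vec :: "real \<Rightarrow> real \<Rightarrow> real list" where
  "p_vec \<eta> nB = (let p = p_dep \<eta> nB in [1 - 3 * p / 4, p / 4, p / 4, p / 4])"

definition entropy :: "real list \<Rightarrow> real" where
  "entropy ps = - sum_list (map (\<lambda>x. if x = 0 then 0 else x * log 2 x) ps)"

definition R_ach :: "real \<Rightarrow> real \<Rightarrow> real" where
  "R_ach \<eta> nB = max (1 - entropy (p_vec \<eta> nB)) 0"

end

theory Submission
  imports Defs
begin

definition gH :: "real \<Rightarrow> real" where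
  "gH p = - ((1 - 3*p/4) * log 2 (1 - 3*p/4)) - 3 * ((p/4) * log 2 (p/4))"

lemma ent_eq: "0 < p \<Longrightarrow> p \<le> 1 \<Longrightarrow> entropy (p_vec \<eta> x) = gH p" if "p = p_dep \<eta> x" for p
  using that by (simp add: entropy_def p_vec_def gH_def Let_def)

lemma gH_deriv: "0 < p \<Longrightarrow> p < 4/3 \<Longrightarrow>
   (gH has_real_derivative (3/4) * (ln (1 - 3*p/4) - ln (p/4)) / ln 2) (at p)"
  unfolding gH_def log_def
  apply (rule derivative_eq_intros refl | simp)+
  apply (simp add: field_simps)
  done

lemma gH_mono: assumes "0 < a" "a \<le> b" "b \<le> 1" shows "gH a \<le> gH b"
proof (rule DERIV_nonneg_imp_increasing_open[OF assms(2)])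
  fix x assume x: "a < x" "x < b"
  have "ln (x/4) \<le> ln (1 - 3*x/4)" using x assms by (subst ln_le_cancel_iff) auto
  then show "\<exists>y. (gH has_real_derivative y) (at x) \<and> 0 \<le> y"
  proof (intro exI conjI)
    show "(gH has_real_derivative (3/4) * (ln (1 - 3*x/4) - ln (x/4)) / ln 2) (at x)"
      by (rule gH_deriv) (use x assms in auto)
    show "0 \<le> (3/4) * (ln (1 - 3*x/4) - ln (x/4)) / ln 2"
      using \<open>ln (x/4) \<le> ln (1 - 3*x/4)\<close> by simp
  qed
next
  show "continuous_on {a..b} gH"
    unfolding gH_def log_def using assms by (intro continuous_intros) auto
qed

lemma pdep_bounds: "0 < \<eta> \<Longrightarrow> \<eta> < 1 \<Longrightarrow> 0 \<le> x \<Longrightarrow> 0 < p_dep \<eta> x \<and> p_dep \<eta> x \<le> 1"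
proof -
  assume a: "0 < \<eta>" "\<eta> < 1" "0 \<le> x"
  have d: "1 \<le> (1 + (1 - \<eta>) * x) ^ 4" using a by (intro one_le_power) auto
  have "\<eta> / (1 + (1 - \<eta>) * x) ^ 4 \<le> \<eta>" using a d by (simp add: divide_le_eq)
  moreover have "0 \<le> \<eta> / (1 + (1 - \<eta>) * x) ^ 4" using a d by simp
  ultimately show ?thesis using a unfolding p_dep_def by auto
qed

lemma pdep_mono: "0 < \<eta> \<Longrightarrow> \<eta> < 1 \<Longrightarrow> 0 \<le> x \<Longrightarrow> x \<le> y \<Longrightarrow> p_dep \<eta> x \<le> p_dep \<eta> y"
proof -
  assume a: "0 < \<eta>" "\<eta> < 1" "0 \<le> x" "x \<le> y"
  have d: "(1 + (1 - \<eta>) * x) ^ 4 \<le> (1 + (1 - \<eta>) * y) ^ 4"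
    using a by (intro power_mono) (auto intro: mult_left_mono)
  have "0 < 1 + (1 - \<eta>) * x" using a by (simp add: add_pos_nonneg)
  then have p1: "0 < (1 + (1 - \<eta>) * x) ^ 4" by simp
  have "0 < 1 + (1 - \<eta>) * y" using a by (simp add: add_pos_nonneg)
  then have p2: "0 < (1 + (1 - \<eta>) * y) ^ 4" by simp
  from p1 p2 have "\<eta> / (1 + (1 - \<eta>) * y) ^ 4 \<le> \<eta> / (1 + (1 - \<eta>) * x) ^ 4"
    using a d by (intro divide_left_mono mult_pos_pos) auto
  then show ?thesis unfolding p_dep_def by simp
qed

lemma Rach_eq: "0 < \<eta> \<Longrightarrow> \<eta> < 1 \<Longrightarrow> 0 \<le> x \<Longrightarrow> R_ach \<eta> x = max (1 - gH (p_dep \<eta> x)) 0"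
  unfolding R_ach_def using ent_eq pdep_bounds by metis

lemma Rach_mono: "0 < \<eta> \<Longrightarrow> \<eta> < 1 \<Longrightarrow> 0 \<le> x \<Longrightarrow> x \<le> y \<Longrightarrow> R_ach \<eta> y \<le> R_ach \<eta> x"
proof -
  assume a: "0 < \<eta>" "\<eta> < 1" "0 \<le> x" "x \<le> y"
  have "gH (p_dep \<eta> x) \<le> gH (p_dep \<eta> y)"
    using a pdep_bounds[of \<eta> x] pdep_bounds[of \<eta> y] pdep_mono[of \<eta> x y] by (intro gH_mono) auto
  then show ?thesis using a Rach_eq[of \<eta> x] Rach_eq[of \<eta> y] by auto
qed

lemma Rach_cont: assumes "0 < \<eta>" "\<eta> < 1" "0 < x" shows "isCont (R_ach \<eta>) x"
proof -
  have "continuous_on {0<..} (\<lambda>x. max (1 - gH (p_dep \<eta> x)) 0)"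
  proof -
    have "continuous_on {0<..} (p_dep \<eta>)" unfolding p_dep_def using assms
    proof (intro continuous_intros ballI)
      fix y :: real assume "y \<in> {0<..}"
      then have "0 < 1 + (1 - \<eta>) * y" using assms by (simp add: add_pos_nonneg)
      then show "(1 + (1 - \<eta>) * y) ^ 4 \<noteq> 0" by simp
    qed
    moreover have "continuous_on {0<..1} gH" unfolding gH_def log_def
      by (intro continuous_intros) auto
    moreover have "p_dep \<eta> ` {0<..} \<subseteq> {0<..1}" using pdep_bounds assms by fastforce
    ultimately show ?thesis
      by (intro continuous_intros continuous_on_compose2[where f="p_dep \<eta>" and g=gH]) auto
  qed
  then have "continuous_on {0<..} (R_ach \<eta>)"
    by (rule continuous_on_cong[THEN iffD1, rotated 2]) (use Rach_eq assms in auto)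
  then show ?thesis using assms by (metis continuous_on_eq_continuous_at open_greaterThan greaterThan_iff)
qed

lemma ccov_mono: "0 < \<eta> \<Longrightarrow> \<eta> < 1 \<Longrightarrow> 0 \<le> x \<Longrightarrow> x \<le> y \<Longrightarrow> c_cov \<eta> x \<le> c_cov \<eta> y"
  unfolding c_cov_def
  by (intro divide_right_mono real_sqrt_le_mono mult_mono) (auto intro: mult_left_mono)

lemma ccov_cont: "\<eta> \<noteq> 1 \<Longrightarrow> isCont (c_cov \<eta>) x"
  unfolding c_cov_def by (intro continuous_intros) auto

lemma Rach_meas: "X \<in> borel_measurable M \<Longrightarrow> (\<lambda>x. R_ach \<eta> (X x)) \<in> borel_measurable M"
  unfolding R_ach_def entropy_def p_vec_def Let_def p_dep_def by simp measurable


lemma gH_nonneg: assumes "0 < p" "p \<le> 1" shows "0 \<le> gH p"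
proof -
  have "log 2 (1 - 3*p/4) \<le> 0" using assms by simp
  moreover have "log 2 (p/4) \<le> 0" using assms by simp
  ultimately have "(1 - 3*p/4) * log 2 (1 - 3*p/4) \<le> 0" "(p/4) * log 2 (p/4) \<le> 0"
    using assms by (auto intro: mult_nonneg_nonpos)
  then show ?thesis unfolding gH_def by linarith
qed

lemma ccov_nonneg: "0 < \<eta> \<Longrightarrow> \<eta> < 1 \<Longrightarrow> 0 \<le> x \<Longrightarrow> 0 \<le> c_cov \<eta> x"
  unfolding c_cov_def by (intro divide_nonneg_pos) auto

theorem lemma1:
  fixes M :: "'a measure" and X :: "'a \<Rightarrow> real"
    and n :: nat and \<delta> \<eta>0 lam \<epsilon>cov \<epsilon>rel :: real
  assumes "prob_space M"
    and "distributed M lborel X (exponential_density lam)"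
    and "0 < n" and "0 < \<delta>" and "0 < \<eta>0" and "\<eta>0 < 1" and "0 < lam"
    and "0 < \<epsilon>cov" and "\<epsilon>cov < 1" and "0 < \<epsilon>rel" and "\<epsilon>rel < 1"
  defines "feasible \<equiv> \<lambda>q R.
              measure M {\<omega> \<in> space M. q > 2 * \<delta> / sqrt (real n) * c_cov \<eta>0 (X \<omega>)} \<le> \<epsilon>cov
            \<and> measure M {\<omega> \<in> space M. R > R_ach \<eta>0 (X \<omega>)} \<le> \<epsilon>rel
            \<and> 0 \<le> q \<and> q \<le> 1 \<and> 0 \<le> R \<and> R \<le> 1"
    and "q_max \<equiv> (let k = sqrt (2 * \<eta>0) / (1 - \<eta>0);
                        Z = 1 - 2 * \<eta>0 / lam * ln (1 - \<epsilon>cov)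
                    in min 1 (2 * \<delta> / sqrt (real n) * k * sqrt ((Z\<^sup>2 - 1) / (4 * \<eta>0))))"
    and "R_max \<equiv> max (1 - entropy (p_vec \<eta>0 (- (1 / lam) * ln \<epsilon>rel))) 0"
  shows "feasible q_max R_max \<and> (\<forall>q R. feasible q R \<longrightarrow> q * R \<le> q_max * R_max)"
proof -
  interpret P: prob_space M by fact
  note D = assms(2)
  have Xm[measurable]: "X \<in> borel_measurable M"
    using distributed_measurable[OF D] by simp
  have cm[measurable]: "(\<lambda>x. c_cov \<eta>0 (X x)) \<in> borel_measurable M"
    unfolding c_cov_def by measurable
  have Rm[measurable]: "(\<lambda>x. R_ach \<eta>0 (X x)) \<in> borel_measurable M"
    by (rule Rach_meas[OF Xm])
  define a where "a = 2 * \<delta> / sqrt (real n)"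
  have a0: "0 < a" unfolding a_def using assms by simp
  define xc where "xc = - ln (1 - \<epsilon>cov) / lam"
  define xr where "xr = - (1 / lam) * ln \<epsilon>rel"
  have xc0: "0 < xc" unfolding xc_def using assms by (simp add: divide_neg_pos)
  have xr0: "0 < xr" unfolding xr_def using assms by (simp add: divide_neg_pos)
  have le: "measure M {\<omega> \<in> space M. X \<omega> \<le> t} = 1 - exp (- t * lam)" if "0 \<le> t" for t
    using P.exponential_distributedD_le[OF D that assms(7)] by simp
  have gt: "measure M {\<omega> \<in> space M. t < X \<omega>} = exp (- t * lam)" if "0 \<le> t" for t
    using P.exponential_distributedD_gt[OF D that assms(7)] by simp
  have exc: "exp (- xc * lam) = 1 - \<epsilon>cov" unfolding xc_def using assms by simp
  have exr: "exp (- xr * lam) = \<epsilon>rel" unfolding xr_def using assms by simp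
  have null: "measure M {\<omega> \<in> space M. X \<omega> \<le> 0} = 0" using le[of 0] by simp
  have feq: "feasible = (\<lambda>q R.
              measure M {\<omega> \<in> space M. q > a * c_cov \<eta>0 (X \<omega>)} \<le> \<epsilon>cov
            \<and> measure M {\<omega> \<in> space M. R > R_ach \<eta>0 (X \<omega>)} \<le> \<epsilon>rel
            \<and> 0 \<le> q \<and> q \<le> 1 \<and> 0 \<le> R \<and> R \<le> 1)"
    unfolding feasible_def a_def by simp
  have qeq: "q_max = min 1 (a * c_cov \<eta>0 xc)"
  proof -
    have Z: "1 - 2 * \<eta>0 / lam * ln (1 - \<epsilon>cov) = 1 + 2 * \<eta>0 * xc"
      unfolding xc_def by (simp add: field_simps)
    have "((1 + 2 * \<eta>0 * xc)\<^sup>2 - 1) / (4 * \<eta>0) = xc * (1 + \<eta>0 * xc)"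
      using assms by (simp add: field_simps power2_eq_square)
    then have "sqrt (2 * \<eta>0) / (1 - \<eta>0) * sqrt (((1 + 2 * \<eta>0 * xc)\<^sup>2 - 1) / (4 * \<eta>0))
        = c_cov \<eta>0 xc"
      unfolding c_cov_def by (simp add: real_sqrt_mult mult.assoc)
    note E = this
    show ?thesis unfolding q_max_def Let_def Z a_def
      by (subst mult.assoc[of "2 * \<delta> / sqrt (real n)"], subst E, rule refl)
  qed
  have Req: "R_max = R_ach \<eta>0 xr" unfolding R_max_def R_ach_def xr_def by simp
  have Rb: "0 \<le> R_ach \<eta>0 x \<and> R_ach \<eta>0 x \<le> 1" if "0 \<le> x" for x
    using Rach_eq[of \<eta>0 x] pdep_bounds[of \<eta>0 x] gH_nonneg[of "p_dep \<eta>0 x"] assms that by auto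
  have cnn: "0 \<le> a * c_cov \<eta>0 x" if "0 \<le> x" for x using a0 ccov_nonneg[of \<eta>0 x] assms that by simp
  have feas_q: "measure M {\<omega> \<in> space M. q_max > a * c_cov \<eta>0 (X \<omega>)} \<le> \<epsilon>cov"
  proof -
    have "{\<omega> \<in> space M. q_max > a * c_cov \<eta>0 (X \<omega>)} \<subseteq> {\<omega> \<in> space M. X \<omega> \<le> xc}"
    proof safe
      fix \<omega> assume w: "\<omega> \<in> space M" "q_max > a * c_cov \<eta>0 (X \<omega>)"
      show "X \<omega> \<le> xc"
      proof (rule ccontr)
        assume "\<not> X \<omega> \<le> xc"
        then have "c_cov \<eta>0 xc \<le> c_cov \<eta>0 (X \<omega>)" using ccov_mono[of \<eta>0 xc "X \<omega>"] xc0 assms by simp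
        then have "a * c_cov \<eta>0 xc \<le> a * c_cov \<eta>0 (X \<omega>)" using a0 by simp
        then show False using w qeq by linarith
      qed
    qed
    then have "measure M {\<omega> \<in> space M. q_max > a * c_cov \<eta>0 (X \<omega>)} \<le> measure M {\<omega> \<in> space M. X \<omega> \<le> xc}"
      by (intro P.finite_measure_mono) auto
    then show ?thesis using le[of xc] xc0 exc by simp
  qed
  have feas_R: "measure M {\<omega> \<in> space M. R_max > R_ach \<eta>0 (X \<omega>)} \<le> \<epsilon>rel"
  proof -
    have "{\<omega> \<in> space M. R_max > R_ach \<eta>0 (X \<omega>)} \<subseteq> {\<omega> \<in> space M. xr < X \<omega>} \<union> {\<omega> \<in> space M. X \<omega> \<le> 0}"
    proof -
      have "xr < X \<omega> \<or> X \<omega> \<le> 0" if w: "R_max > R_ach \<eta>0 (X \<omega>)" for \<omega>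
      proof (rule ccontr)
        assume "\<not> (xr < X \<omega> \<or> X \<omega> \<le> 0)"
        then have "R_ach \<eta>0 xr \<le> R_ach \<eta>0 (X \<omega>)" using Rach_mono[of \<eta>0 "X \<omega>" xr] assms by simp
        then show False using w Req by simp
      qed
      then show ?thesis by auto
    qed
    then have "measure M {\<omega> \<in> space M. R_max > R_ach \<eta>0 (X \<omega>)}
       \<le> measure M ({\<omega> \<in> space M. xr < X \<omega>} \<union> {\<omega> \<in> space M. X \<omega> \<le> 0})"
      by (intro P.finite_measure_mono) auto
    also have "\<dots> \<le> measure M {\<omega> \<in> space M. xr < X \<omega>} + measure M {\<omega> \<in> space M. X \<omega> \<le> 0}"
      by (intro measure_Un_le) auto
    finally show ?thesis using gt[of xr] xr0 exr null by simp
  qed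
  have F: "feasible q_max R_max"
    unfolding feq using feas_q feas_R qeq Req Rb[of xr] xr0 cnn[of xc] xc0 by auto
  have qle: "q \<le> q_max" if f: "feasible q R" for q R
  proof (rule ccontr)
    assume "\<not> q \<le> q_max"
    moreover have q1: "q \<le> 1" and mq: "measure M {\<omega> \<in> space M. q > a * c_cov \<eta>0 (X \<omega>)} \<le> \<epsilon>cov"
      using f unfolding feq by auto
    ultimately have qgt: "a * c_cov \<eta>0 xc < q" using qeq by linarith
    have "isCont (\<lambda>x. a * c_cov \<eta>0 x) xc" using ccov_cont[of \<eta>0] assms by (intro continuous_intros) auto
    then have "((\<lambda>x. a * c_cov \<eta>0 x) \<longlongrightarrow> a * c_cov \<eta>0 xc) (at xc)" by (simp add: isCont_def)
    from order_tendstoD(2)[OF this qgt] obtain d where d: "d > 0"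
      "\<And>y. y \<noteq> xc \<Longrightarrow> dist y xc < d \<Longrightarrow> a * c_cov \<eta>0 y < q"
      unfolding eventually_at by auto
    define x' where "x' = xc + d/2"
    have x'1: "a * c_cov \<eta>0 x' < q" using d unfolding x'_def by (intro d(2)) (auto simp: dist_real_def)
    have x'0: "0 \<le> x'" "xc < x'" using xc0 d unfolding x'_def by auto
    have "{\<omega> \<in> space M. X \<omega> \<le> x'} \<subseteq> {\<omega> \<in> space M. q > a * c_cov \<eta>0 (X \<omega>)} \<union> {\<omega> \<in> space M. X \<omega> \<le> 0}"
    proof -
      have "a * c_cov \<eta>0 (X \<omega>) < q \<or> X \<omega> \<le> 0" if w: "X \<omega> \<le> x'" for \<omega>
      proof (rule ccontr)
        assume "\<not> (a * c_cov \<eta>0 (X \<omega>) < q \<or> X \<omega> \<le> 0)"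
        then have nn: "\<not> a * c_cov \<eta>0 (X \<omega>) < q" "0 < X \<omega>" by auto
        then have "c_cov \<eta>0 (X \<omega>) \<le> c_cov \<eta>0 x'" using ccov_mono[of \<eta>0 "X \<omega>" x'] assms w by simp
        then have "a * c_cov \<eta>0 (X \<omega>) \<le> a * c_cov \<eta>0 x'" using a0 by simp
        then show False using nn x'1 by simp
      qed
      then show ?thesis by auto
    qed
    then have "measure M {\<omega> \<in> space M. X \<omega> \<le> x'}
       \<le> measure M ({\<omega> \<in> space M. q > a * c_cov \<eta>0 (X \<omega>)} \<union> {\<omega> \<in> space M. X \<omega> \<le> 0})"
      by (intro P.finite_measure_mono) auto
    also have "\<dots> \<le> measure M {\<omega> \<in> space M. q > a * c_cov \<eta>0 (X \<omega>)} + measure M {\<omega> \<in> space M. X \<omega> \<le> 0}"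
      by (intro measure_Un_le) auto
    finally have "1 - exp (- x' * lam) \<le> \<epsilon>cov" using le[of x'] x'0 null mq by simp
    moreover have "exp (- x' * lam) < exp (- xc * lam)" using x'0 assms by simp
    ultimately show False using exc by linarith
  qed
  have Rle: "R \<le> R_max" if f: "feasible q R" for q R
  proof (rule ccontr)
    assume "\<not> R \<le> R_max"
    then have Rgt: "R_ach \<eta>0 xr < R" using Req by simp
    have mR: "measure M {\<omega> \<in> space M. R > R_ach \<eta>0 (X \<omega>)} \<le> \<epsilon>rel"
      using f unfolding feq by auto
    have "isCont (R_ach \<eta>0) xr" using Rach_cont[of \<eta>0 xr] assms xr0 by simp
    then have "(R_ach \<eta>0 \<longlongrightarrow> R_ach \<eta>0 xr) (at xr)" by (simp add: isCont_def)
    from order_tendstoD(2)[OF this Rgt] obtain d where d: "d > 0"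
      "\<And>y. y \<noteq> xr \<Longrightarrow> dist y xr < d \<Longrightarrow> R_ach \<eta>0 y < R"
      unfolding eventually_at by auto
    define x' where "x' = xr - min d xr / 2"
    have x'1: "R_ach \<eta>0 x' < R" using d xr0 unfolding x'_def by (intro d(2)) (auto simp: dist_real_def)
    have x'0: "0 < x'" "x' < xr" using xr0 d unfolding x'_def by auto
    have "{\<omega> \<in> space M. x' < X \<omega>} \<subseteq> {\<omega> \<in> space M. R > R_ach \<eta>0 (X \<omega>)}"
    proof safe
      fix \<omega> assume w: "\<omega> \<in> space M" "x' < X \<omega>"
      then have "R_ach \<eta>0 (X \<omega>) \<le> R_ach \<eta>0 x'" using Rach_mono[of \<eta>0 x' "X \<omega>"] assms x'0 by simp
      then show "R_ach \<eta>0 (X \<omega>) < R" using x'1 by simp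
    qed
    then have "measure M {\<omega> \<in> space M. x' < X \<omega>} \<le> measure M {\<omega> \<in> space M. R > R_ach \<eta>0 (X \<omega>)}"
      by (intro P.finite_measure_mono) auto
    then have "exp (- x' * lam) \<le> \<epsilon>rel" using gt[of x'] x'0 mR by simp
    moreover have "exp (- xr * lam) < exp (- x' * lam)" using x'0 assms by simp
    ultimately show False using exr by linarith
  qed
  show ?thesis
  proof (intro conjI allI impI F)
    fix q R assume f: "feasible q R"
    have "0 \<le> R" using f unfolding feq by auto
    moreover have "0 \<le> q_max" using qeq cnn[of xc] xc0 by simp
    ultimately show "q * R \<le> q_max * R_max"
      using qle[OF f] Rle[OF f] by (intro mult_mono) auto
  qed
qed

end
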